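(* Let $d\ge1$ and $1<p_1<p<p_2<\infty$. Then there exist Young functions $\Phi$ and $\Psi$ with $q_\Phi<p_1$, $p_\Psi>p_2$, and $L^\Phi(\mathbb R^d)=L^\Psi(\mathbb R^d)=L^p(\mathbb R^d)$.
   Context: A Young function is a convex function $\Phi:[0,\infty)\to[0,\infty)$ with $\Phi(0)=0$, $\Phi(t)>0$ for $t>0$, and $\lim_{t\to\infty}\Phi(t)=\infty$. $\Phi'$ denotes the right derivative of $\Phi$. The Lebesgue exponents of $\Phi$ are $p_\Phi=\sup_{t>0}\frac{t\Phi'(t)}{\Phi(t)}$ and $q_\Phi=\inf_{t>0}\frac{t\Phi'(t)}{\Phi(t)}$. For a measurable $f$ on $\mathbb R^d$, $\rho_\Phi(f)=\int_{\mathbb R^d}\Phi(|f(x)|)\,dx$, the Luxemburg norm is $\|f\|_{L^\Phi}=\inf\{\lambda>0:\rho_\Phi(f/\lambda)\le1\}$, and the Orlicz space $L^\Phi(\mathbb R^d)$ consists of (classes of) measurable $f$ with $\|f\|_{L^\Phi}<\infty$. *)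

theory Defs
  imports "HOL-Analysis.Analysis"
begin

definition young_function :: "(real \<Rightarrow> real) \<Rightarrow> bool" where
  "young_function \<Phi> \<longleftrightarrow>
     convex_on {0..} \<Phi> \<and> \<Phi> 0 = 0 \<and> (\<forall>t>0. \<Phi> t > 0) \<and> filterlim \<Phi> at_top at_top"

definition right_deriv :: "(real \<Rightarrow> real) \<Rightarrow> real \<Rightarrow> real" where
  "right_deriv \<Phi> t = Lim (at_right t) (\<lambda>s. (\<Phi> s - \<Phi> t) / (s - t))"

text \<open>Lebesgue exponents (as in the paper: p is the sup, q is the inf); values in ereal.\<close>
definition upper_exponent :: "(real \<Rightarrow> real) \<Rightarrow> ereal" where
  "upper_exponent \<Phi> = (SUP t\<in>{0<..}. ereal (t * right_deriv \<Phi> t / \<Phi> t))"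

definition lower_exponent :: "(real \<Rightarrow> real) \<Rightarrow> ereal" where
  "lower_exponent \<Phi> = (INF t\<in>{0<..}. ereal (t * right_deriv \<Phi> t / \<Phi> t))"

definition modular :: "(real \<Rightarrow> real) \<Rightarrow> ('a::euclidean_space \<Rightarrow> real) \<Rightarrow> ennreal" where
  "modular \<Phi> f = (\<integral>\<^sup>+ x. ennreal (\<Phi> \<bar>f x\<bar>) \<partial>lebesgue)"

text \<open>Luxemburg norm, with value \<infinity> when no admissible \<lambda> exists.\<close>
definition luxemburg_norm :: "(real \<Rightarrow> real) \<Rightarrow> ('a::euclidean_space \<Rightarrow> real) \<Rightarrow> ereal" where
  "luxemburg_norm \<Phi> f = Inf {ereal l | l. l > 0 \<and> modular \<Phi> (\<lambda>x. f x / l) \<le> 1}"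

definition orlicz_space :: "(real \<Rightarrow> real) \<Rightarrow> ('a::euclidean_space \<Rightarrow> real) set" where
  "orlicz_space \<Phi> = {f. f \<in> borel_measurable lebesgue \<and> luxemburg_norm \<Phi> f < \<infinity>}"

definition lp_space :: "real \<Rightarrow> ('a::euclidean_space \<Rightarrow> real) set" where
  "lp_space p = {f. f \<in> borel_measurable lebesgue \<and>
                    (\<integral>\<^sup>+ x. ennreal (\<bar>f x\<bar> powr p) \<partial>lebesgue) < \<infinity>}"

end

theory Submission
  imports Defs
begin

definition FF :: "real \<Rightarrow> real \<Rightarrow> real \<Rightarrow> real" where
  "FF p k t = t powr p + k * max 0 (t - 1)"

lemma powr_convex0:
  assumes "p \<ge> 1" shows "convex_on {0..} (\<lambda>x::real. x powr p)"
proof (rule convex_onI)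
  fix t x y :: real assume t: "0 < t" "t < 1" and x: "x \<in> {0..}" and y: "y \<in> {0..}"
  show "((1 - t) *\<^sub>R x + t *\<^sub>R y) powr p \<le> (1 - t) * x powr p + t * y powr p"
  proof (cases "x = 0 \<or> y = 0")
    case False
    then have "x \<in> {0<..}" "y \<in> {0<..}" using x y by auto
    then show ?thesis using convex_onD[OF powr_convex[OF assms], of t x y] t by auto
  next
    case True
    have tp: "s powr p \<le> s" if "0 \<le> s" "s \<le> 1" for s :: real
      using powr_mono2'[of s 1 p] that assms
      by (metis powr_le1 powr_one_eq_one powr_one_gt_zero_iff le_less powr_less_mono2_neg less_le_not_le order.trans powr_mono')
    show ?thesis
    proof (cases "x = 0")
      case True
      have "(t * y) powr p = t powr p * y powr p" using t y by (simp add: powr_mult)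
      also have "\<dots> \<le> t * y powr p" using tp[of t] t by (intro mult_right_mono) auto
      finally show ?thesis using True assms by simp
    next
      case False
      with True have y0: "y = 0" by auto
      have "((1-t) * x) powr p = (1-t) powr p * x powr p" using t x by (simp add: powr_mult)
      also have "\<dots> \<le> (1-t) * x powr p" using tp[of "1-t"] t by (intro mult_right_mono) auto
      finally show ?thesis using y0 assms by simp
    qed
  qed
qed simp

lemma max_convex: "convex_on {0..} (\<lambda>x::real. max 0 (x - 1))"
proof (rule convex_onI)
  fix t x y :: real assume t: "0 < t" "t < 1"
  have "(1 - t) * x + t * y - 1 = (1-t)*(x-1) + t*(y-1)" by (simp add: algebra_simps)
  moreover have "(1-t)*(x-1) \<le> (1-t) * max 0 (x-1)" using t by (intro mult_left_mono) auto
  moreover have "t*(y-1) \<le> t * max 0 (y-1)" using t by (intro mult_left_mono) auto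
  moreover have "0 \<le> (1-t) * max 0 (x-1) + t * max 0 (y-1)" using t by auto
  ultimately show "max 0 ((1 - t) *\<^sub>R x + t *\<^sub>R y - 1) \<le> (1 - t) * max 0 (x - 1) + t * max 0 (y - 1)"
    by simp
qed simp

lemma FF_young: assumes "p \<ge> 1" "k \<ge> 0" shows "young_function (FF p k)"
  unfolding young_function_def
proof (intro conjI allI impI)
  show "convex_on {0..} (FF p k)" unfolding FF_def
    using powr_convex0[OF assms(1)] max_convex assms(2) by (intro convex_on_add convex_on_cmul) auto
  show "FF p k 0 = 0" by (simp add: FF_def)
  fix t :: real assume "t > 0" then show "FF p k t > 0" unfolding FF_def
    using assms by (intro add_pos_nonneg) auto
next
  have "\<forall>\<^sub>F t in at_top. t \<le> FF p k t"
    using eventually_ge_at_top[of "1::real"]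
  proof eventually_elim
    case (elim t)
    have "t = t powr 1" using elim by simp
    also have "\<dots> \<le> t powr p" using elim assms by (intro powr_mono) auto
    also have "\<dots> \<le> FF p k t" unfolding FF_def using assms by auto
    finally show ?case .
  qed
  then show "filterlim (FF p k) at_top at_top"
    by (rule filterlim_at_top_mono[OF filterlim_ident])
qed

lemma FF_bounds: assumes "p \<ge> 1" "k \<ge> 0" "t \<ge> 0"
  shows "t powr p \<le> FF p k t" "FF p k t \<le> (1 + k) * t powr p"
proof -
  show "t powr p \<le> FF p k t" unfolding FF_def using assms by auto
  have "max 0 (t - 1) \<le> t powr p"
  proof (cases "t \<ge> 1")
    case True
    have "t = t powr 1" using True by simp
    also have "\<dots> \<le> t powr p" using True assms by (intro powr_mono) auto
    finally show ?thesis by simp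
  qed auto
  then show "FF p k t \<le> (1 + k) * t powr p" unfolding FF_def using assms
    by (simp add: algebra_simps mult_left_mono)
qed

lemma FF_rderiv: assumes "s \<ge> 1" "p \<ge> 1"
  shows "right_deriv (FF p k) s = p * s powr (p - 1) + k"
proof -
  define G where "G t = t powr p + k * (t - 1)" for t
  have "(G has_field_derivative p * s powr (p - 1) + k) (at s within {s<..})"
    unfolding G_def using assms
    by (auto intro!: derivative_eq_intros)
  then have lim: "((\<lambda>y. (G y - G s) / (y - s)) \<longlongrightarrow> p * s powr (p - 1) + k) (at_right s)"
    by (simp add: has_field_derivative_iff)
  have ev: "\<forall>\<^sub>F y in at_right s. (G y - G s) / (y - s) = (FF p k y - FF p k s) / (y - s)"
    using eventually_at_right_less[of s]
    by eventually_elim (use assms in \<open>auto simp: G_def FF_def\<close>)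
  have "((\<lambda>y. (FF p k y - FF p k s) / (y - s)) \<longlongrightarrow> p * s powr (p - 1) + k) (at_right s)"
    using tendsto_cong[OF ev] lim by simp
  then show ?thesis unfolding right_deriv_def
    by (intro tendsto_Lim) auto
qed

lemma FF_meas: assumes [measurable]: "g \<in> borel_measurable M" shows "(\<lambda>x. ennreal (FF p k (g x))) \<in> borel_measurable M"
  unfolding FF_def by measurable

lemma pow_meas: assumes [measurable]: "g \<in> borel_measurable M" shows "(\<lambda>x. ennreal (\<bar>g x\<bar> powr p)) \<in> borel_measurable M"
  by measurable

lemma FF_space: assumes "p \<ge> 1" "k \<ge> 0"
  shows "orlicz_space (FF p k) = (lp_space p :: ('a::euclidean_space \<Rightarrow> real) set)"
proof (intro set_eqI iffI)
  fix f :: "'a \<Rightarrow> real"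
  assume "f \<in> orlicz_space (FF p k)"
  then have fm: "f \<in> borel_measurable lebesgue" and fin: "luxemburg_norm (FF p k) f < \<infinity>"
    unfolding orlicz_space_def by auto
  have "{ereal l | l. l > 0 \<and> modular (FF p k) (\<lambda>x. f x / l) \<le> 1} \<noteq> {}"
    using fin unfolding luxemburg_norm_def by (metis Inf_empty less_irrefl top_ereal_def)
  then obtain l where l: "l > 0" and ml: "modular (FF p k) (\<lambda>x. f x / l) \<le> 1" by auto
  have "(\<integral>\<^sup>+ x. ennreal (\<bar>f x\<bar> powr p) \<partial>lebesgue)
      \<le> (\<integral>\<^sup>+ x. ennreal (l powr p) * ennreal (FF p k \<bar>f x / l\<bar>) \<partial>lebesgue)"
  proof (intro nn_integral_mono)
    fix x
    have "\<bar>f x\<bar> powr p = (l * \<bar>f x / l\<bar>) powr p" using l by (simp add: abs_divide)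
    also have "\<dots> = l powr p * \<bar>f x / l\<bar> powr p" using l by (subst powr_mult) auto
    also have "\<dots> \<le> l powr p * FF p k \<bar>f x / l\<bar>"
      using FF_bounds(1)[OF assms, of "\<bar>f x / l\<bar>"] by (intro mult_left_mono) auto
    finally show "ennreal (\<bar>f x\<bar> powr p) \<le> ennreal (l powr p) * ennreal (FF p k \<bar>f x / l\<bar>)"
      by (simp add: ennreal_mult'[symmetric] ennreal_leI)
  qed
  also have "\<dots> = ennreal (l powr p) * modular (FF p k) (\<lambda>x. f x / l)"
    unfolding modular_def using fm by (intro nn_integral_cmult FF_meas) (intro borel_measurable_abs borel_measurable_divide borel_measurable_const)
  also have "\<dots> \<le> ennreal (l powr p) * 1" using ml by (intro mult_left_mono) auto
  also have "\<dots> < \<infinity>" by simp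
  finally have "(\<integral>\<^sup>+ x. ennreal (\<bar>f x\<bar> powr p) \<partial>lebesgue) < \<infinity>" .
  then show "f \<in> lp_space p" unfolding lp_space_def using fm by blast
next
  fix f :: "'a \<Rightarrow> real"
  assume "f \<in> lp_space p"
  then have fm: "f \<in> borel_measurable lebesgue" and fin: "(\<integral>\<^sup>+ x. ennreal (\<bar>f x\<bar> powr p) \<partial>lebesgue) < \<infinity>"
    unfolding lp_space_def by auto
  then obtain r where r: "r \<ge> 0" "(\<integral>\<^sup>+ x. ennreal (\<bar>f x\<bar> powr p) \<partial>lebesgue) = ennreal r"
    using less_top ennreal_cases by (metis ennreal_less_top infinity_ennreal_def less_irrefl)
  define C where "C = 1 + k"
  have C: "C \<ge> 1" using assms by (simp add: C_def)
  define l where "l = (C * r + 1) powr (1 / p)"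
  have Cr: "C * r + 1 > 0" using C r by (simp add: add_nonneg_pos)
  have l: "l > 0" using Cr by (simp add: l_def)
  have lp: "l powr p = C * r + 1" using Cr assms by (simp add: l_def powr_powr)
  have "modular (FF p k) (\<lambda>x. f x / l)
      \<le> (\<integral>\<^sup>+ x. ennreal (C / l powr p) * ennreal (\<bar>f x\<bar> powr p) \<partial>lebesgue)"
    unfolding modular_def
  proof (intro nn_integral_mono)
    fix x
    have "FF p k \<bar>f x / l\<bar> \<le> C * \<bar>f x / l\<bar> powr p"
      using FF_bounds(2)[OF assms, of "\<bar>f x / l\<bar>"] by (simp add: C_def)
    also have "\<dots> = C / l powr p * \<bar>f x\<bar> powr p" using l by (simp add: abs_divide powr_divide)
    finally show "ennreal (FF p k \<bar>f x / l\<bar>) \<le> ennreal (C / l powr p) * ennreal (\<bar>f x\<bar> powr p)"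
      using C l by (simp add: ennreal_mult'[symmetric] ennreal_leI)
  qed
  also have "\<dots> = ennreal (C / l powr p) * ennreal r"
    by (simp add: nn_integral_cmult[OF pow_meas[OF fm]] r)
  also have "\<dots> = ennreal (C * r / (C * r + 1))"
    using C r l lp by (simp add: ennreal_mult'[symmetric])
  also have "\<dots> \<le> 1" using Cr by (simp add: ennreal_le_1)
  finally have "modular (FF p k) (\<lambda>x. f x / l) \<le> 1" .
  then have "luxemburg_norm (FF p k) f \<le> ereal l"
    unfolding luxemburg_norm_def using l by (intro Inf_lower) auto
  then have "luxemburg_norm (FF p k) f < \<infinity>"
    by (rule order.strict_trans1) simp
  then show "f \<in> orlicz_space (FF p k)" unfolding orlicz_space_def using fm by auto
qed

theorem mainTheorem6:
  fixes p1 p p2 :: real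
  assumes "1 < p1" and "p1 < p" and "p < p2"
  shows "\<exists>\<Phi> \<Psi>. young_function \<Phi> \<and> young_function \<Psi> \<and>
           lower_exponent \<Phi> < ereal p1 \<and> upper_exponent \<Psi> > ereal p2 \<and>
           orlicz_space \<Phi> = (lp_space p :: ('a::euclidean_space \<Rightarrow> real) set) \<and>
           orlicz_space \<Psi> = (lp_space p :: ('a \<Rightarrow> real) set)"
proof -
  define s where "s = 2 * p1 / (p1 - 1)"
  define S where "S = s powr p"
  define k where "k = p * S / p1"
  have p1: "p \<ge> 1" using assms by simp
  have s1: "s > 1" using assms by (simp add: s_def field_simps)
  have S: "S > 0" using s1 by (simp add: S_def)
  have k: "k > 0" using S assms by (simp add: k_def)
  have ks: "(p1 - 1) * s = 2 * p1" using assms by (simp add: s_def)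
  have key: "p1 * (s - 1) - s = p1" using ks by (simp add: algebra_simps)
  have ss: "s * s powr (p - 1) = S" using s1 by (simp add: S_def powr_diff)
  have FFs: "FF p k s = S + k * (s - 1)" using s1 by (simp add: FF_def S_def)
  have rd: "right_deriv (FF p k) s = p * s powr (p - 1) + k" using s1 p1 by (intro FF_rderiv) auto
  have ratio: "s * right_deriv (FF p k) s / FF p k s = (p * S + k * s) / (S + k * (s - 1))"
    unfolding rd FFs using ss by (simp add: algebra_simps)
  have den: "S + k * (s - 1) > 0" using S k s1 by (simp add: add_pos_nonneg)
  have "(p - p1) * S < p * S" using assms S by simp
  also have "p * S = k * p1" using assms by (simp add: k_def)
  also have "k * p1 = k * (p1 * (s - 1) - s)" using key by simp
  finally have "p * S + k * s < p1 * (S + k * (s - 1))" by (simp add: algebra_simps)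
  then have lt: "s * right_deriv (FF p k) s / FF p k s < p1"
    unfolding ratio using den by (simp add: divide_less_eq)
  have "lower_exponent (FF p k) \<le> ereal (s * right_deriv (FF p k) s / FF p k s)"
    unfolding lower_exponent_def using s1 by (intro INF_lower) auto
  also have "\<dots> < ereal p1" using lt by simp
  finally have low: "lower_exponent (FF p k) < ereal p1" .
  have rd1: "right_deriv (FF p p2) 1 = p * 1 powr (p - 1) + p2" using p1 by (intro FF_rderiv) auto
  have "ereal p2 < ereal (1 * right_deriv (FF p p2) 1 / FF p p2 1)"
    unfolding rd1 using assms by (simp add: FF_def)
  also have "\<dots> \<le> upper_exponent (FF p p2)"
    unfolding upper_exponent_def by (intro SUP_upper) auto
  finally have up: "ereal p2 < upper_exponent (FF p p2)" .
  have p20: "p2 \<ge> 0" using assms by simp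
  show ?thesis
    using FF_young[OF p1 less_imp_le[OF k]] FF_young[OF p1 p20] low up
      FF_space[OF p1 less_imp_le[OF k]] FF_space[OF p1 p20] by blast
qed

end
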